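(* Let $\sigma_{01},\sigma_{12}>0$, $\sigma_{02}=\sigma_{01}+\sigma_{12}$, let $\Gamma_{ij}\ge0$ ($i,j=1,2$) with $\Gamma_{12}=\Gamma_{21}$, and let $M=(M_1,M_2)$ with $M_1,M_2>0$. Then every minimizing configuration $(m^k)_{k\ge1}$ for $\overline{e_0}(M)$ has only finitely many nontrivial components, i.e. there is $N<\infty$ such that $m^k=(0,0)$ for all but at most $N$ indices $k$, and hence $\overline{e_0}(M)=\sum_{k=1}^N e_0(m^k)$ after relabeling.
   Context: For $m=(m_1,m_2)$ with $m_1,m_2\ge0$ set $$e_0(m)=2\sigma_{01}\sqrt{\pi(m_1+m_2)}+2\sigma_{12}\sqrt{\pi m_2}+\sum_{i,j=1}^2\frac{\Gamma_{ij}m_im_j}{4\pi},$$ so $e_0(0,0)=0$. $\overline{e_0}(M)=\inf\{\sum_{k\ge1}e_0(m^k): m^k=(m_1^k,m_2^k),\ m_i^k\ge0,\ \sum_k m_i^k=M_i,\ i=1,2\}$. A minimizing configuration is an admissible sequence $(m^k)$ attaining this infimum; nontrivial components are those with $m^k\neq(0,0)$. *)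

theory Defs
  imports "HOL-Analysis.Analysis"
begin

definition comp :: "real \<times> real \<Rightarrow> nat \<Rightarrow> real" where
  "comp m i = (if i = 1 then fst m else snd m)"

definition e0 :: "real \<Rightarrow> real \<Rightarrow> (nat \<Rightarrow> nat \<Rightarrow> real) \<Rightarrow> real \<times> real \<Rightarrow> real" where
  "e0 s01 s12 Gam m =
     2 * s01 * sqrt (pi * (fst m + snd m)) + 2 * s12 * sqrt (pi * snd m)
     + (\<Sum>i\<in>{1..2::nat}. \<Sum>j\<in>{1..2::nat}. Gam i j * comp m i * comp m j / (4 * pi))"

definition admissible :: "real \<times> real \<Rightarrow> (nat \<Rightarrow> real \<times> real) \<Rightarrow> bool" where
  "admissible M ms \<longleftrightarrow>
     (\<forall>k. fst (ms k) \<ge> 0 \<and> snd (ms k) \<ge> 0) \<and>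
     (\<lambda>k. fst (ms k)) sums fst M \<and> (\<lambda>k. snd (ms k)) sums snd M"

text \<open>Total energy of a configuration, as an extended nonnegative real (the series may diverge).\<close>
definition total_energy :: "real \<Rightarrow> real \<Rightarrow> (nat \<Rightarrow> nat \<Rightarrow> real) \<Rightarrow> (nat \<Rightarrow> real \<times> real) \<Rightarrow> ennreal" where
  "total_energy s01 s12 Gam ms = (\<Sum>k. ennreal (e0 s01 s12 Gam (ms k)))"

definition e0bar :: "real \<Rightarrow> real \<Rightarrow> (nat \<Rightarrow> nat \<Rightarrow> real) \<Rightarrow> real \<times> real \<Rightarrow> ennreal" where
  "e0bar s01 s12 Gam M = (INF ms \<in> {ms. admissible M ms}. total_energy s01 s12 Gam ms)"

definition minimizing :: "real \<Rightarrow> real \<Rightarrow> (nat \<Rightarrow> nat \<Rightarrow> real) \<Rightarrow> real \<times> real \<Rightarrow> (nat \<Rightarrow> real \<times> real) \<Rightarrow> bool" where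
  "minimizing s01 s12 Gam M ms \<longleftrightarrow>
     admissible M ms \<and> total_energy s01 s12 Gam ms = e0bar s01 s12 Gam M"

end

theory Submission imports Defs begin

lemma e0_expand:
  "e0 s01 s12 Gam m = 2* s01* sqrt(pi*(fst m+snd m)) + 2* s12* sqrt(pi* snd m)
     + (Gam 1 1 * fst m * fst m + Gam 1 2 * fst m * snd m + Gam 2 1 * snd m * fst m + Gam 2 2 * snd m * snd m)/(4*pi)"
proof -
  have s: "{1..2::nat} = {1,2}" by auto
  show ?thesis unfolding e0_def s by (simp add: comp_def add_divide_distrib)
qed

lemma e0_zero: "e0 s01 s12 Gam (0,0) = 0"
  by (simp add: e0_expand)

lemma e0_nonneg:
  assumes "s01 > 0" "s12 > 0" "\<And>i j. i \<in> {1,2} \<Longrightarrow> j \<in> {1,2} \<Longrightarrow> Gam i j \<ge> 0"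
    "fst m \<ge> 0" "snd m \<ge> 0"
  shows "e0 s01 s12 Gam m \<ge> 0"
proof -
  have g: "Gam 1 1 \<ge> 0" "Gam 1 2 \<ge> 0" "Gam 2 1 \<ge> 0" "Gam 2 2 \<ge> 0" using assms(3) by auto
  have "Gam 1 1 * fst m * fst m + Gam 1 2 * fst m * snd m + Gam 2 1 * snd m * fst m + Gam 2 2 * snd m * snd m \<ge> 0"
    using g assms(4,5) by (intro add_nonneg_nonneg mult_nonneg_nonneg) auto
  then show ?thesis unfolding e0_expand using assms by (intro add_nonneg_nonneg) auto
qed

lemma sqrt_gain:
  fixes x y :: real assumes "0 < x" "x \<le> y"
  shows "sqrt (x + y) \<le> sqrt x + sqrt y - sqrt x / 2"
proof -
  have y: "y > 0" using assms by simp
  have sy: "sqrt y > 0" using y by simp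
  have "sqrt (x+y) \<le> sqrt y + x / (2* sqrt y)"
  proof (rule real_le_lsqrt)
    show "0 \<le> sqrt y + x / (2 * sqrt y)" using sy assms by simp
    have "(sqrt y + x / (2 * sqrt y))^2 = y + x + (x/(2* sqrt y))^2"
      using sy y by (simp add: power2_sum field_simps)
    then show "x + y \<le> (sqrt y + x / (2 * sqrt y))^2" by simp
  qed
  moreover have "x / sqrt y \<le> sqrt x"
  proof -
    have "x / sqrt y \<le> x / sqrt x" using assms sy
      by (intro divide_left_mono) (auto simp: real_sqrt_le_iff)
    also have "\<dots> = sqrt x" using assms by (metis less_eq_real_def real_div_sqrt)
    finally show ?thesis .
  qed
  ultimately show ?thesis by simp
qed

lemma merge_lt_aux:
  assumes s01: "s01 > 0" and s12: "s12 > 0"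
    and G: "\<And>i j. i \<in> {1,2} \<Longrightarrow> j \<in> {1,2} \<Longrightarrow> Gam i j \<ge> 0"
    and a: "fst a \<ge> 0" "snd a \<ge> 0" and b: "fst b \<ge> 0" "snd b \<ge> 0"
    and sa: "fst a + snd a > 0" and sab: "fst a + snd a \<le> fst b + snd b"
    and sb1: "fst b + snd b \<le> 1"
    and small: "(Gam 1 1 + Gam 1 2 + Gam 2 1 + Gam 2 2)/(2*pi) * (fst b + snd b) < s01"
  shows "e0 s01 s12 Gam (a + b) < e0 s01 s12 Gam a + e0 s01 s12 Gam b"
proof -
  obtain a1 a2 where aa: "a = (a1,a2)" by fastforce
  obtain b1 b2 where bb: "b = (b1,b2)" by fastforce
  define GG where "GG = (Gam 1 1 + Gam 1 2 + Gam 2 1 + Gam 2 2)/(2*pi)"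
  define sa where "sa = a1 + a2"
  define sb where "sb = b1 + b2"
  have g: "Gam 1 1 \<ge> 0" "Gam 1 2 \<ge> 0" "Gam 2 1 \<ge> 0" "Gam 2 2 \<ge> 0" using G by auto
  have a1: "a1 \<ge> 0" "a2 \<ge> 0" "b1 \<ge> 0" "b2 \<ge> 0" using a b aa bb by auto
  have sa0: "sa > 0" "sa \<le> sb" "sb \<le> 1" using sa sab sb1 aa bb sa_def sb_def by auto
  have sm: "GG * sb < s01" using small aa bb GG_def sb_def by simp
  have GG0: "GG \<ge> 0" using g by (simp add: GG_def)
  have q1: "sqrt (pi*(sa+sb)) \<le> sqrt (pi* sa) + sqrt (pi* sb) - sqrt (pi* sa)/2"
    using sqrt_gain[of "pi* sa" "pi* sb"] sa0 by (simp add: distrib_left)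
  have q2: "sqrt (pi*(a2+b2)) \<le> sqrt (pi*a2) + sqrt (pi*b2)"
    using sqrt_add_le_add_sqrt[of "pi*a2" "pi*b2"] a1 by (simp add: distrib_left)
  define cr where "cr = (Gam 1 1 * (2*a1*b1) + Gam 1 2 * (a1*b2 + a2*b1) + Gam 2 1 * (a2*b1+a1*b2) + Gam 2 2 * (2*a2*b2))/(4*pi)"
  have ab_le: "a1*b1 \<le> sa* sb" "a1*b2 \<le> sa* sb" "a2*b1 \<le> sa* sb" "a2*b2 \<le> sa* sb"
    using a1 unfolding sa_def sb_def by (auto intro!: mult_mono)
  have "Gam 1 1 * (2*a1*b1) + Gam 1 2 * (a1*b2 + a2*b1) + Gam 2 1 * (a2*b1+a1*b2) + Gam 2 2 * (2*a2*b2)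
     \<le> Gam 1 1 * (2*(sa* sb)) + Gam 1 2 * (2*(sa* sb)) + Gam 2 1 * (2*(sa* sb)) + Gam 2 2 * (2*(sa* sb))"
    using g ab_le by (intro add_mono mult_left_mono) auto
  then have "cr \<le> (Gam 1 1 * (2*(sa * sb)) + Gam 1 2 * (2*(sa * sb)) + Gam 2 1 * (2*(sa * sb)) + Gam 2 2 * (2*(sa * sb)))/(4*pi)"
    unfolding cr_def by (intro divide_right_mono) auto
  also have "\<dots> = GG * sa * sb" unfolding GG_def by (simp add: field_simps)
  finally have cr_le: "cr \<le> GG * sa * sb" .
  have "GG * sa * sb = (GG * sb) * sqrt sa * sqrt sa" using sa0 by (simp add: mult.assoc)
  also have "\<dots> \<le> (GG * sb) * sqrt sa"
    using sa0 GG0 by (intro mult_left_le) auto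
  also have "\<dots> < s01 * sqrt sa" using sm sa0 by (intro mult_strict_right_mono) auto
  also have "\<dots> \<le> s01 * sqrt (pi* sa)" using s01 sa0 pi_gt3
    by (intro mult_left_mono) auto
  finally have crlt: "cr < s01 * sqrt (pi* sa)" using cr_le by linarith
  have exp: "e0 s01 s12 Gam (a + b) = 2* s01* sqrt(pi*(sa+sb)) + 2* s12* sqrt(pi*(a2+b2))
     + (Gam 1 1 * a1 * a1 + Gam 1 2 * a1 * a2 + Gam 2 1 * a2 * a1 + Gam 2 2 * a2 * a2)/(4*pi)
     + (Gam 1 1 * b1 * b1 + Gam 1 2 * b1 * b2 + Gam 2 1 * b2 * b1 + Gam 2 2 * b2 * b2)/(4*pi) + cr"
    unfolding e0_expand aa bb cr_def sa_def sb_def by (simp add: field_simps)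
  have ea: "e0 s01 s12 Gam a = 2* s01* sqrt(pi* sa) + 2* s12* sqrt(pi*a2)
     + (Gam 1 1 * a1 * a1 + Gam 1 2 * a1 * a2 + Gam 2 1 * a2 * a1 + Gam 2 2 * a2 * a2)/(4*pi)"
    unfolding e0_expand aa sa_def by simp
  have eb: "e0 s01 s12 Gam b = 2* s01* sqrt(pi* sb) + 2* s12* sqrt(pi*b2)
     + (Gam 1 1 * b1 * b1 + Gam 1 2 * b1 * b2 + Gam 2 1 * b2 * b1 + Gam 2 2 * b2 * b2)/(4*pi)"
    unfolding e0_expand bb sb_def by simp
  have "2* s01* sqrt(pi*(sa+sb)) \<le> 2* s01*(sqrt (pi* sa) + sqrt (pi* sb) - sqrt (pi* sa)/2)"
    using q1 s01 by simp
  moreover have "2* s12* sqrt(pi*(a2+b2)) \<le> 2* s12*(sqrt (pi*a2) + sqrt (pi*b2))"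
    using q2 s12 by simp
  ultimately show ?thesis unfolding exp ea eb using crlt by (simp add: algebra_simps)
qed

lemma merge_lt:
  assumes s01: "s01 > 0" and s12: "s12 > 0"
    and G: "\<And>i j. i \<in> {1,2} \<Longrightarrow> j \<in> {1,2} \<Longrightarrow> Gam i j \<ge> 0"
    and a: "fst a \<ge> 0" "snd a \<ge> 0" and b: "fst b \<ge> 0" "snd b \<ge> 0"
    and sa: "fst a + snd a > 0" and sb: "fst b + snd b > 0"
    and sa1: "fst a + snd a \<le> 1" and sb1: "fst b + snd b \<le> 1"
    and smalla: "(Gam 1 1 + Gam 1 2 + Gam 2 1 + Gam 2 2)/(2*pi) * (fst a + snd a) < s01"
    and smallb: "(Gam 1 1 + Gam 1 2 + Gam 2 1 + Gam 2 2)/(2*pi) * (fst b + snd b) < s01"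
  shows "e0 s01 s12 Gam (a + b) < e0 s01 s12 Gam a + e0 s01 s12 Gam b"
proof (cases "fst a + snd a \<le> fst b + snd b")
  case True
  then show ?thesis using merge_lt_aux[OF s01 s12 G a b sa True sb1 smallb] by blast
next
  case False
  then have "fst b + snd b \<le> fst a + snd a" by simp
  from merge_lt_aux[OF s01 s12 G b a sb this sa1 smalla]
  show ?thesis by (simp add: add.commute)
qed

theorem corollary3p2:
  fixes s01 s12 s02 :: real and Gam :: "nat \<Rightarrow> nat \<Rightarrow> real"
    and M :: "real \<times> real" and ms :: "nat \<Rightarrow> real \<times> real"
  assumes "s01 > 0" and "s12 > 0" and "s02 = s01 + s12"
    and "\<And>i j. i \<in> {1,2} \<Longrightarrow> j \<in> {1,2} \<Longrightarrow> Gam i j \<ge> 0"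
    and "Gam 1 2 = Gam 2 1"
    and "fst M > 0" and "snd M > 0"
    and "minimizing s01 s12 Gam M ms"
  shows "finite {k. ms k \<noteq> (0, 0)} \<and>
         e0bar s01 s12 Gam M = ennreal (\<Sum>k\<in>{k. ms k \<noteq> (0, 0)}. e0 s01 s12 Gam (ms k))"
proof -
  note s01 = assms(1) and s12 = assms(2) and G = assms(4)
  have adm: "admissible M ms" and E: "total_energy s01 s12 Gam ms = e0bar s01 s12 Gam M"
    using assms(8) unfolding minimizing_def by auto
  have nn: "fst (ms k) \<ge> 0" "snd (ms k) \<ge> 0" for k using adm unfolding admissible_def by auto
  have s1: "(\<lambda>k. fst (ms k)) sums fst M" and s2: "(\<lambda>k. snd (ms k)) sums snd M"
    using adm unfolding admissible_def by auto
  define f where "f k = e0 s01 s12 Gam (ms k)" for k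
  have f0: "f k \<ge> 0" for k unfolding f_def using e0_nonneg[OF s01 s12 G nn(1) nn(2)] .
  have lower: "e0bar s01 s12 Gam M \<le> total_energy s01 s12 Gam ms'" if "admissible M ms'" for ms'
    unfolding e0bar_def using that by (intro INF_lower) auto
  define ms0 :: "nat \<Rightarrow> real \<times> real" where "ms0 k = (if k = 0 then M else (0,0))" for k
  have "admissible M ms0"
  proof -
    have "(\<lambda>k. fst (ms0 k)) = (\<lambda>k. if k = 0 then fst M else 0)"
         "(\<lambda>k. snd (ms0 k)) = (\<lambda>k. if k = 0 then snd M else 0)"
      unfolding ms0_def by auto
    then show ?thesis unfolding admissible_def ms0_def
      using sums_single[of 0 "\<lambda>_. fst M"] sums_single[of 0 "\<lambda>_. snd M"] assms(6,7)
      by (auto simp: ms0_def)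
  qed
  moreover have "total_energy s01 s12 Gam ms0 = ennreal (e0 s01 s12 Gam M)"
    unfolding total_energy_def
    by (subst suminf_finite[of "{0}"]) (auto simp: ms0_def e0_zero)
  ultimately have "total_energy s01 s12 Gam ms \<le> ennreal (e0 s01 s12 Gam M)"
    using lower[of ms0] E by simp
  then have "(\<Sum>k. ennreal (f k)) \<le> ennreal (e0 s01 s12 Gam M)"
    unfolding total_energy_def f_def .
  then have ntop: "(\<Sum>k. ennreal (f k)) \<noteq> top"
    using ennreal_neq_top top_unique by metis
  have sf: "summable f" using summable_suminf_not_top[OF f0 ntop] .
  have TE: "total_energy s01 s12 Gam ms = ennreal (suminf f)"
    unfolding total_energy_def f_def[symmetric] using suminf_ennreal2[OF f0 sf] .
  define S where "S = {k. ms k \<noteq> (0, 0)}"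
  have fin: "finite S"
  proof (rule ccontr)
    assume inf: "infinite S"
    define GG where "GG = (Gam 1 1 + Gam 1 2 + Gam 2 1 + Gam 2 2)/(2*pi)"
    have GG0: "GG \<ge> 0" using G by (simp add: GG_def)
    define eps where "eps = min 1 (s01 / (GG + 1))"
    have eps0: "eps > 0" using s01 GG0 by (simp add: eps_def)
    have epsGG: "GG * x < s01" if "0 \<le> x" "x \<le> eps" for x
    proof -
      have "x \<le> s01 / (GG+1)" using that eps_def by simp
      then have "x * (GG+1) \<le> s01" using GG0 by (simp add: field_simps)
      moreover have "GG * x \<le> x * (GG + 1) - x" by (simp add: algebra_simps)
      ultimately have "GG * x \<le> s01 - x" by linarith
      then show ?thesis using s01 that GG0 by (cases "x = 0") auto
    qed
    define s where "s k = fst (ms k) + snd (ms k)" for k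
    have "summable s" unfolding s_def using s1 s2 by (intro summable_add) (auto simp: sums_iff)
    then have "s \<longlonglongrightarrow> 0" by (rule summable_LIMSEQ_zero)
    then have "eventually (\<lambda>k. s k < eps) sequentially"
      using eps0 by (auto dest: order_tendstoD(2))
    then obtain N where N: "\<And>k. k \<ge> N \<Longrightarrow> s k < eps" by (auto simp: eventually_sequentially)
    obtain i where i: "i \<ge> N" "i \<in> S" using inf unfolding infinite_nat_iff_unbounded_le by blast
    obtain j where j: "j \<ge> Suc i" "j \<in> S" using inf unfolding infinite_nat_iff_unbounded_le by blast
    have ij: "i \<noteq> j" using i j by auto
    have pos: "s k > 0" if "k \<in> S" for k
    proof -
      have "ms k \<noteq> (0,0)" using that S_def by auto
      then have "fst (ms k) \<noteq> 0 \<or> snd (ms k) \<noteq> 0" by (metis prod.collapse)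
      then show ?thesis using nn[of k] unfolding s_def by linarith
    qed
    let ?a = "ms i" and ?b = "ms j"
    have si: "s i < eps" "s j < eps" using N i j by auto
    have lt: "e0 s01 s12 Gam (?a + ?b) < e0 s01 s12 Gam ?a + e0 s01 s12 Gam ?b"
    proof (rule merge_lt[OF s01 s12 G nn(1) nn(2) nn(1) nn(2)])
      have e1: "eps \<le> 1" unfolding eps_def by simp
      show "0 < fst ?a + snd ?a" "0 < fst ?b + snd ?b" using pos[OF i(2)] pos[OF j(2)] unfolding s_def .
      show "fst ?a + snd ?a \<le> 1" "fst ?b + snd ?b \<le> 1" using si e1 unfolding s_def by linarith+
      have "GG * s i < s01" using epsGG[of "s i"] pos[OF i(2)] si by linarith
      then show "(Gam 1 1 + Gam 1 2 + Gam 2 1 + Gam 2 2)/(2*pi) * (fst ?a + snd ?a) < s01"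
        unfolding GG_def s_def .
      have "GG * s j < s01" using epsGG[of "s j"] pos[OF j(2)] si by linarith
      then show "(Gam 1 1 + Gam 1 2 + Gam 2 1 + Gam 2 2)/(2*pi) * (fst ?b + snd ?b) < s01"
        unfolding GG_def s_def .
    qed
    define ms' where "ms' k = (if k = i then ?a + ?b else if k = j then (0,0) else ms k)" for k
    have fst': "(\<lambda>k. fst (ms' k)) = (\<lambda>k. fst (ms k) + (if k = i then fst ?b else 0) - (if k = j then fst ?b else 0))"
      unfolding ms'_def using ij by auto
    have snd': "(\<lambda>k. snd (ms' k)) = (\<lambda>k. snd (ms k) + (if k = i then snd ?b else 0) - (if k = j then snd ?b else 0))"
      unfolding ms'_def using ij by auto
    have adm': "admissible M ms'"
      unfolding admissible_def
    proof (intro conjI allI)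
      fix k show "fst (ms' k) \<ge> 0" "snd (ms' k) \<ge> 0" unfolding ms'_def using nn by auto
    next
      have "(\<lambda>k. fst (ms k) + (if k = i then fst ?b else 0) - (if k = j then fst ?b else 0)) sums (fst M + fst ?b - fst ?b)"
        by (intro sums_diff sums_add s1 sums_single[of i "\<lambda>_. fst ?b", simplified] sums_single[of j "\<lambda>_. fst ?b", simplified])
      then show "(\<lambda>k. fst (ms' k)) sums fst M" unfolding fst' by simp
    next
      have "(\<lambda>k. snd (ms k) + (if k = i then snd ?b else 0) - (if k = j then snd ?b else 0)) sums (snd M + snd ?b - snd ?b)"
        by (intro sums_diff sums_add s2 sums_single[of i "\<lambda>_. snd ?b", simplified] sums_single[of j "\<lambda>_. snd ?b", simplified])
      then show "(\<lambda>k. snd (ms' k)) sums snd M" unfolding snd' by simp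
    qed
    define f' where "f' k = e0 s01 s12 Gam (ms' k)" for k
    have f'eq: "f' = (\<lambda>k. f k + (if k = i then e0 s01 s12 Gam (?a + ?b) - f i else 0) - (if k = j then f j else 0))"
      unfolding f'_def f_def ms'_def using ij by (auto simp: e0_zero)
    have f'sums: "f' sums (suminf f + (e0 s01 s12 Gam (?a + ?b) - f i) - f j)"
      unfolding f'eq
      by (intro sums_diff sums_add summable_sums[OF sf] sums_single[of i "\<lambda>_. e0 s01 s12 Gam (?a + ?b) - f i", simplified]
           sums_single[of j "\<lambda>_. f j", simplified])
    have f'0: "f' k \<ge> 0" for k
    proof -
      have h: "fst (ms' k) \<ge> 0" "snd (ms' k) \<ge> 0" using adm' unfolding admissible_def by auto
      show ?thesis unfolding f'_def using e0_nonneg[OF s01 s12 G h(1) h(2)] .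
    qed
    have "total_energy s01 s12 Gam ms' = ennreal (suminf f')"
      unfolding total_energy_def f'_def[symmetric]
      using suminf_ennreal2[OF f'0 sums_summable[OF f'sums]] .
    also have "suminf f' = suminf f + (e0 s01 s12 Gam (?a + ?b) - f i) - f j"
      using f'sums sums_unique by metis
    also have "ennreal \<dots> < ennreal (suminf f)"
    proof (subst ennreal_less_iff)
      show "0 \<le> suminf f + (e0 s01 s12 Gam (?a + ?b) - f i) - f j"
        using f'sums sums_unique suminf_nonneg[OF sums_summable[OF f'sums] f'0] by metis
      show "suminf f + (e0 s01 s12 Gam (?a + ?b) - f i) - f j < suminf f"
        using lt unfolding f_def by simp
    qed
    also have "\<dots> = e0bar s01 s12 Gam M" using TE E by simp
    finally show False using lower[OF adm'] by simp
  qed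
  have "total_energy s01 s12 Gam ms = (\<Sum>k\<in>S. ennreal (f k))"
    unfolding total_energy_def f_def
    by (rule suminf_finite[OF fin]) (auto simp: S_def e0_zero)
  also have "\<dots> = ennreal (sum f S)" using f0 by simp
  finally show ?thesis using fin E unfolding S_def f_def by simp
qed

end
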